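(* Let $E$ be a finite-dimensional real Euclidean space with translation space $V$, let $\Phi_{\mathrm{aff}}$ be an affine root system on $E$ with a basis $B$ (corresponding to a chamber), and let $J\subset B$ be such that $DJ$ is linearly independent. Let $\Phi'_{\mathrm{aff}}$ be an affine root subsystem of $\Phi_{\mathrm{aff}}$ containing $(\Phi_{\mathrm{aff}})_J$. Then there exists a basis of $\Phi'_{\mathrm{aff}}$ containing $J$.
   Context: Affine root systems are in the sense of Macdonald. For an affine root $a$, $Da\in V^*$ is its gradient: $a(x+v)=a(x)+(Da)(v)$; $DJ=\{Da\mid a\in J\}$. $(\Phi_{\mathrm{aff}})_J=\{a\in\Phi_{\mathrm{aff}}\mid Da\in\mathbb R\cdot DJ\}$. *)

theory Defs
  imports "HOL-Analysis.Analysis"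
begin

text \<open>The affine Euclidean space E is identified with its translation space
  V, modelled by a type 'v of class euclidean_space (choose an origin).  The gradient
  Da \<in> V* is identified with a vector of V via the inner product.\<close>

definition aff_fun :: "('v::euclidean_space \<Rightarrow> real) \<Rightarrow> bool" where
  "aff_fun a \<longleftrightarrow> (\<exists>l c. linear l \<and> a = (\<lambda>x. l x + c))"

text \<open>Gradient: for affine a, a x = grad a \<bullet> x + a 0.\<close>
definition grad :: "('v::euclidean_space \<Rightarrow> real) \<Rightarrow> 'v" where
  "grad a = (\<Sum>b\<in>Basis. (a b - a 0) *\<^sub>R b)"

definition coroot :: "('v::euclidean_space \<Rightarrow> real) \<Rightarrow> 'v" where
  "coroot a = (2 / (grad a \<bullet> grad a)) *\<^sub>R grad a"

definition refl_pt :: "('v::euclidean_space \<Rightarrow> real) \<Rightarrow> 'v \<Rightarrow> 'v" where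
  "refl_pt a x = x - a x *\<^sub>R coroot a"

definition refl_fun :: "('v::euclidean_space \<Rightarrow> real) \<Rightarrow> ('v \<Rightarrow> real) \<Rightarrow> ('v \<Rightarrow> real)" where
  "refl_fun a b = b \<circ> refl_pt a"

inductive_set refl_group :: "('v::euclidean_space \<Rightarrow> real) set \<Rightarrow> ('v \<Rightarrow> 'v) set"
  for S where
    id: "id \<in> refl_group S"
  | step: "w \<in> refl_group S \<Longrightarrow> a \<in> S \<Longrightarrow> refl_pt a \<circ> w \<in> refl_group S"

text \<open>Affine root system in the sense of Macdonald (axioms AR1--AR4).\<close>
definition affine_root_system :: "('v::euclidean_space \<Rightarrow> real) set \<Rightarrow> bool" where
  "affine_root_system S \<longleftrightarrow>
     (\<forall>a\<in>S. aff_fun a \<and> grad a \<noteq> 0) \<and>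
     (\<forall>f. aff_fun f \<longrightarrow> (\<exists>T c. finite T \<and> T \<subseteq> S \<and> f = (\<lambda>x. \<Sum>t\<in>T. c t * t x))) \<and>
     (\<forall>a\<in>S. \<forall>b\<in>S. refl_fun a b \<in> S) \<and>
     (\<forall>a\<in>S. \<forall>b\<in>S. 2 * (grad a \<bullet> grad b) / (grad a \<bullet> grad a) \<in> \<int>) \<and>
     (\<forall>K. compact K \<longrightarrow> finite {w \<in> refl_group S. w ` K \<inter> K \<noteq> {}})"

definition affine_root_subsystem ::
    "('v::euclidean_space \<Rightarrow> real) set \<Rightarrow> ('v \<Rightarrow> real) set \<Rightarrow> bool" where
  "affine_root_subsystem S S' \<longleftrightarrow> S' \<subseteq> S \<and> (\<forall>a\<in>S'. \<forall>b\<in>S'. refl_fun a b \<in> S')"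

definition root_hyp :: "('v::euclidean_space \<Rightarrow> real) \<Rightarrow> 'v set" where
  "root_hyp a = {x. a x = 0}"

definition chamber :: "('v::euclidean_space \<Rightarrow> real) set \<Rightarrow> 'v set \<Rightarrow> bool" where
  "chamber S C \<longleftrightarrow> (\<exists>x. x \<notin> (\<Union>a\<in>S. root_hyp a) \<and>
      C = connected_component_set (- (\<Union>a\<in>S. root_hyp a)) x)"

definition is_wall :: "('v::euclidean_space \<Rightarrow> real) \<Rightarrow> 'v set \<Rightarrow> bool" where
  "is_wall a C \<longleftrightarrow> (\<exists>x e. e > 0 \<and> x \<in> root_hyp a \<and> ball x e \<inter> root_hyp a \<subseteq> closure C)"

definition root_basis :: "('v::euclidean_space \<Rightarrow> real) set \<Rightarrow> ('v \<Rightarrow> real) set \<Rightarrow> bool" where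
  "root_basis S B \<longleftrightarrow> (\<exists>C. chamber S C \<and>
      B = {a \<in> S. (\<forall>x\<in>C. 0 < a x) \<and> is_wall a C \<and> (\<lambda>x. a x / 2) \<notin> S})"

definition roots_J :: "('v::euclidean_space \<Rightarrow> real) set \<Rightarrow> ('v \<Rightarrow> real) set \<Rightarrow> ('v \<Rightarrow> real) set" where
  "roots_J S J = {a \<in> S. grad a \<in> span (grad ` J)}"

end

theory Submission
  imports Defs
begin

lemma aff_cont: assumes "aff_fun (a::'v::euclidean_space \<Rightarrow> real)" shows "continuous_on A a"
proof -
  obtain l c where l: "linear l" and a: "a = (\<lambda>x. l x + c)" using assms unfolding aff_fun_def by blast
  have "bounded_linear l" using l by (simp add: linear_conv_bounded_linear)
  hence "continuous_on A l" by (simp add: linear_continuous_on)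
  thus ?thesis unfolding a by (intro continuous_intros)
qed

theorem corollaryA3:
  fixes Phi Phi' B J :: "('v::euclidean_space \<Rightarrow> real) set"
  assumes "affine_root_system Phi"
    and "root_basis Phi B"
    and "J \<subseteq> B"
    and "independent (grad ` J)"
    and "affine_root_subsystem Phi Phi'"
    and "roots_J Phi J \<subseteq> Phi'"
  shows "\<exists>B'. root_basis Phi' B' \<and> J \<subseteq> B'"
proof -
  obtain C where ch: "chamber Phi C" and B: "B = {a \<in> Phi. (\<forall>x\<in>C. 0 < a x) \<and> is_wall a C \<and> (\<lambda>x. a x / 2) \<notin> Phi}"
    using assms(2) unfolding root_basis_def by blast
  obtain x where x: "x \<notin> (\<Union>a\<in>Phi. root_hyp a)" and C: "C = connected_component_set (- (\<Union>a\<in>Phi. root_hyp a)) x"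
    using ch unfolding chamber_def by blast
  have sub: "Phi' \<subseteq> Phi" using assms(5) unfolding affine_root_subsystem_def by blast
  define C' where "C' = connected_component_set (- (\<Union>a\<in>Phi'. root_hyp a)) x"
  have x': "x \<notin> (\<Union>a\<in>Phi'. root_hyp a)" using x sub by blast
  have ch': "chamber Phi' C'" unfolding chamber_def C'_def using x' by (intro exI[of _ x]) simp
  have CC: "C \<subseteq> C'" unfolding C C'_def
    by (rule connected_component_mono) (use sub in blast)
  have xC: "x \<in> C" unfolding C using x by simp
  have JP: "J \<subseteq> Phi'"
  proof
    fix a assume "a \<in> J"
    hence "a \<in> Phi" "grad a \<in> span (grad ` J)" using assms(3) B by (auto intro: span_base)
    thus "a \<in> Phi'" using assms(6) unfolding roots_J_def by blast
  qed
  define B' where "B' = {a \<in> Phi'. (\<forall>x\<in>C'. 0 < a x) \<and> is_wall a C' \<and> (\<lambda>x. a x / 2) \<notin> Phi'}"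
  have "J \<subseteq> B'"
  proof
    fix a assume aJ: "a \<in> J"
    have aB: "a \<in> Phi" "\<forall>x\<in>C. 0 < a x" "is_wall a C" "(\<lambda>x. a x / 2) \<notin> Phi"
      using aJ assms(3) B by auto
    have aP: "a \<in> Phi'" using aJ JP by blast
    have "aff_fun a" using assms(1) aB(1) unfolding affine_root_system_def by simp
    hence cont: "continuous_on C' a" by (rule aff_cont)
    have conn: "connected (a ` C')" unfolding C'_def
      by (rule connected_continuous_image[OF cont[unfolded C'_def]]) simp
    have nz: "\<forall>y\<in>C'. a y \<noteq> 0"
    proof
      fix y assume "y \<in> C'"
      hence "y \<in> - (\<Union>a\<in>Phi'. root_hyp a)" unfolding C'_def using connected_component_subset by blast
      thus "a y \<noteq> 0" using aP unfolding root_hyp_def by blast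
    qed
    have pos: "\<forall>y\<in>C'. 0 < a y"
    proof (rule ccontr)
      assume "\<not> ?thesis"
      then obtain y where y: "y \<in> C'" "a y \<le> 0" by force
      have "a x > 0" using aB(2) xC by blast
      have "is_interval (a ` C')" using conn by (simp add: is_interval_connected_1)
      moreover have "a y \<in> a ` C'" "a x \<in> a ` C'" using y xC CC by auto
      ultimately have "0 \<in> a ` C'"
        using \<open>a x > 0\<close> y(2) unfolding is_interval_1 by (metis order.strict_implies_order)
      thus False using nz by force
    qed
    have wall: "is_wall a C'" using aB(3) closure_mono[OF CC] unfolding is_wall_def by (meson order_trans)
    have "(\<lambda>x. a x / 2) \<notin> Phi'" using aB(4) sub by (auto simp del: )
    thus "a \<in> B'" unfolding B'_def using aP pos wall by simp
  qed
  moreover have "root_basis Phi' B'" unfolding root_basis_def B'_def using ch' by (intro exI[of _ C']) simp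
  ultimately show ?thesis by blast
qed

end
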